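(* Let $\zeta<1$, $t>0$, real $\alpha,\mu$, and $w(x)=(1-\zeta\,\theta(x-t))(x-t)^{\alpha}x^{\mu}e^{-x}$ on $(0,\infty)$, with orthonormal polynomials $p_m(x)=\gamma_mx^m+\gamma_{m,1}x^{m-1}+\dots$ and recurrence coefficients $a_m,b_m$. With $\theta_m=b_m-2m-1-\alpha-\mu-t$ and $\kappa_m=(m+\frac{\mu}{2})t+a_m^2+\frac{\gamma_{m,1}}{\gamma_m}$, one has for $n\ge1$ $$\kappa_{n+1}+\kappa_n=-\theta_n(\theta_n+t+2n+\alpha+1+\mu),$$ $$\frac{\theta_n}{\theta_n+t}\cdot\frac{\theta_{n-1}}{\theta_{n-1}+t}=\frac{\kappa_n^2-\frac{\mu^2t^2}{4}}{\big(\kappa_n-(n+\alpha+\frac{\mu}{2})t\big)\big(\kappa_n-(n+\frac{\mu}{2})t\big)}.$$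
   Context: $\theta$ is the Heaviside function ($\theta(y)=1$ for $y>0$, $0$ otherwise). The $p_m$ are orthonormal: $\int_0^\infty p_ip_jw\,dx=\delta_{ij}$, $\gamma_m>0$, and $a_{m+1}p_{m+1}=(x-b_m)p_m-a_mp_{m-1}$ with $a_m=\gamma_{m-1}/\gamma_m$. *)

theory Defs
  imports "HOL-Analysis.Analysis" "HOL-Computational_Algebra.Polynomial"
begin

definition heaviside :: "real \<Rightarrow> real" where
  "heaviside y = (if y > 0 then 1 else 0)"

definition wgt :: "real \<Rightarrow> real \<Rightarrow> real \<Rightarrow> real \<Rightarrow> real \<Rightarrow> real" where
  "wgt \<zeta> t \<alpha> \<mu> x =
     (1 - \<zeta> * heaviside (x - t)) * \<bar>x - t\<bar> powr \<alpha> * x powr \<mu> * exp (- x)"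

definition orthonormal_system :: "(real \<Rightarrow> real) \<Rightarrow> (nat \<Rightarrow> real poly) \<Rightarrow> bool" where
  "orthonormal_system w p \<longleftrightarrow>
     (\<forall>m. degree (p m) = m \<and> lead_coeff (p m) > 0) \<and>
     (\<forall>i j. set_integrable lborel {0<..} (\<lambda>x. poly (p i) x * poly (p j) x * w x) \<and>
            (LINT x:{0<..}|lborel. poly (p i) x * poly (p j) x * w x) = (if i = j then 1 else 0))"

definition gam :: "(nat \<Rightarrow> real poly) \<Rightarrow> nat \<Rightarrow> real" where
  "gam p m = lead_coeff (p m)"

definition gam1 :: "(nat \<Rightarrow> real poly) \<Rightarrow> nat \<Rightarrow> real" where
  "gam1 p m = coeff (p m) (m - 1)"

definition acoef :: "(nat \<Rightarrow> real poly) \<Rightarrow> nat \<Rightarrow> real" where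
  "acoef p m = gam p (m - 1) / gam p m"

definition bcoef :: "(real \<Rightarrow> real) \<Rightarrow> (nat \<Rightarrow> real poly) \<Rightarrow> nat \<Rightarrow> real" where
  "bcoef w p m = (LINT x:{0<..}|lborel. x * (poly (p m) x)^2 * w x)"

end

theory Submission
  imports Defs "HOL-Real_Asymp.Real_Asymp"
begin


lemma deg_drop: "degree (r::'a::zero poly) \<le> Suc m \<Longrightarrow> coeff r (Suc m) = 0 \<Longrightarrow> degree r \<le> m"
  apply (rule degree_le)
  by (metis Suc_lessI coeff_eq_0 le_less_trans)

lemma A_mult: "[:0, c, 1:] * (q::real poly) = pCons 0 (pCons 0 q) + smult c (pCons 0 q)"
  by (simp add: algebra_simps)

locale osys =
  fixes w :: "real \<Rightarrow> real" and p :: "nat \<Rightarrow> real poly"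
  assumes ortho: "orthonormal_system w p"
begin

lemma degp[simp]: "degree (p m) = m"
  using ortho unfolding orthonormal_system_def by auto

lemma gpos: "gam p m > 0"
  using ortho unfolding orthonormal_system_def gam_def by auto

lemma gnz[simp]: "gam p m \<noteq> 0"
  using gpos[of m] by simp

lemma lc[simp]: "coeff (p m) m = gam p m"
  by (simp add: gam_def)

lemma int_pp: "set_integrable lborel {0<..} (\<lambda>x. poly (p i) x * poly (p j) x * w x)"
  using ortho unfolding orthonormal_system_def by auto

lemma int_pp_val: "(LINT x:{0<..}|lborel. poly (p i) x * poly (p j) x * w x) = (if i = j then 1 else 0)"
  using ortho unfolding orthonormal_system_def by auto

definition L :: "real poly \<Rightarrow> real" where
  "L q = (LINT x:{0<..}|lborel. poly q x * w x)"

lemma p0: "p 0 = [:gam p 0:]"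
  using degp[of 0] by (metis degree_0_id lc)

lemma int_p: "set_integrable lborel {0<..} (\<lambda>x. poly (p i) x * w x)"
proof -
  have eq: "(\<lambda>x. poly (p i) x * poly (p 0) x * w x / gam p 0) = (\<lambda>x. poly (p i) x * w x)"
    by (subst p0) (auto simp: field_simps)
  have "set_integrable lborel {0<..} (\<lambda>x. poly (p i) x * poly (p 0) x * w x / gam p 0)"
    using int_pp[of i 0] by (rule set_integrable_divide)
  then show ?thesis by (simp only: eq)
qed

lemma p_induct[consumes 1, case_names zero step]:
  assumes "degree q \<le> m" and "P 0"
    and "\<And>c k r. k \<le> m \<Longrightarrow> P r \<Longrightarrow> P (smult c (p k) + r)"
  shows "P q"
  using assms
proof (induction m arbitrary: q)
  case 0
  then have "q = smult (coeff q 0 / gam p 0) (p 0) + 0"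
    by (subst p0) (auto simp: degree_0_id)
  moreover have "P (smult (coeff q 0 / gam p 0) (p 0) + 0)"
    by (rule 0(3)[OF _ 0(2)]) simp
  ultimately show ?case by simp
next
  case (Suc m)
  define c where "c = coeff q (Suc m) / gam p (Suc m)"
  define r where "r = q - smult c (p (Suc m))"
  have "degree r \<le> Suc m" unfolding r_def using Suc.prems
    by (metis degree_diff_le degree_smult_le degp order.trans)
  moreover have "coeff r (Suc m) = 0" unfolding r_def c_def by simp
  ultimately have "degree r \<le> m" by (rule deg_drop)
  then have "P r" using Suc by auto
  moreover have "q = smult c (p (Suc m)) + r" unfolding r_def by simp
  moreover have "P (smult c (p (Suc m)) + r)"
    by (rule Suc.prems(3)[OF _ \<open>P r\<close>]) simp
  ultimately show ?case by simp
qed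

lemma int_poly: "set_integrable lborel {0<..} (\<lambda>x. poly q x * w x)"
proof -
  have "degree q \<le> degree q" by simp
  then show ?thesis
  proof (induction q rule: p_induct)
    case zero then show ?case by (simp add: set_integrable_def)
  next
    case (step c k r)
    have "set_integrable lborel {0<..} (\<lambda>x. c * (poly (p k) x * w x) + poly r x * w x)"
      using int_p[of k] step by (intro set_integral_add) auto
    then show ?case by (simp add: algebra_simps)
  qed
qed

lemma L_add: "L (q + r) = L q + L r"
  unfolding L_def using int_poly[of q] int_poly[of r]
  by (simp add: distrib_right set_integral_add)

lemma L_smult: "L (smult c q) = c * L q"
  unfolding L_def by (simp add: mult.assoc)

lemma L_minus: "L (- q) = - L q"
  using L_smult[of "-1" q] by simp

lemma L_diff: "L (q - r) = L q - L r"
  using L_add[of q "-r"] L_minus[of r] by simp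

lemma L_zero: "L 0 = 0"
  unfolding L_def by simp

lemma L_pp: "L (p i * p j) = (if i = j then 1 else 0)"
  unfolding L_def using int_pp_val[of i j] by (simp add: mult.assoc)

lemma L_A: "degree r < n \<Longrightarrow> L (r * p n) = 0"
proof -
  assume d: "degree r < n"
  then have "degree r \<le> n - 1" by simp
  then show ?thesis
  proof (induction r rule: p_induct)
    case zero then show ?case by (simp add: L_zero)
  next
    case (step c k r)
    have "k \<noteq> n" using step d by auto
    then show ?case using step
      by (simp add: distrib_right L_add L_smult L_pp)
  qed
qed

lemma L_B: "degree r \<le> n \<Longrightarrow> L (r * p n) = coeff r n / gam p n"
proof -
  assume d: "degree r \<le> n"
  define c where "c = coeff r n / gam p n"
  define r' where "r' = r - smult c (p n)"
  have "degree r' \<le> n" unfolding r'_def using d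
    by (metis degree_diff_le degree_smult_le degp order.trans)
  moreover have cz: "coeff r' n = 0" unfolding r'_def c_def by simp
  ultimately have "r' = 0 \<or> degree r' < n"
    by (metis le_neq_implies_less leading_coeff_0_iff)
  then have "L (r' * p n) = 0" using L_A L_zero by auto
  moreover have "r = r' + smult c (p n)" unfolding r'_def by simp
  ultimately have "L (r * p n) = 0 + c * L (p n * p n)"
    by (simp add: distrib_right L_add L_smult)
  then show ?thesis by (simp add: L_pp c_def)
qed

definition G :: "nat \<Rightarrow> real" where
  "G m = (if m = 0 then 0 else coeff (p m) (m - 1) / gam p m)"

lemma L_C: "degree r \<le> Suc n \<Longrightarrow>
   L (r * p n) = (coeff r n - coeff r (Suc n) * (coeff (p (Suc n)) n / gam p (Suc n))) / gam p n"
proof -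
  assume d: "degree r \<le> Suc n"
  define c where "c = coeff r (Suc n) / gam p (Suc n)"
  define r' where "r' = r - smult c (p (Suc n))"
  have "degree r' \<le> Suc n" unfolding r'_def using d
    by (metis degree_diff_le degree_smult_le degp order.trans)
  moreover have "coeff r' (Suc n) = 0" unfolding r'_def c_def by simp
  ultimately have "degree r' \<le> n" by (rule deg_drop)
  then have "L (r' * p n) = coeff r' n / gam p n" by (rule L_B)
  moreover have "r = r' + smult c (p (Suc n))" unfolding r'_def by simp
  ultimately have "L (r * p n) = coeff r' n / gam p n + c * 0"
    by (simp add: distrib_right L_add L_smult L_pp)
  also have "coeff r' n = coeff r n - c * coeff (p (Suc n)) n" unfolding r'_def by simp
  finally show ?thesis unfolding c_def by (simp add: mult.commute)
qed

lemma zero_lemma: "degree F \<le> m \<Longrightarrow> (\<And>k. k \<le> m \<Longrightarrow> L (F * p k) = 0) \<Longrightarrow> F = 0"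
proof (induction m arbitrary: F)
  case 0
  then have "coeff F 0 = 0" using L_B[of F 0] by simp
  then show ?case using 0 by (metis degree_0_id le_0_eq pCons_0_0)
next
  case (Suc m)
  then have "coeff F (Suc m) = 0" using L_B[of F "Suc m"] by simp
  then have "degree F \<le> m" by (rule deg_drop[OF Suc.prems(1)])
  then show ?case using Suc by auto
qed


lemma coeff_p_high[simp]: "k < i \<Longrightarrow> coeff (p k) i = 0"
  by (simp add: coeff_eq_0)

definition aa :: "nat \<Rightarrow> real" where
  "aa m = (if m = 0 then 0 else acoef p m)"

lemma acoef_pos: "acoef p m > 0"
  unfolding acoef_def using gpos by simp

lemma pCons_comm: "pCons 0 a * b = pCons 0 b * (a::real poly)"
  by (rule poly_eqI) (simp add: algebra_simps)

lemma bL: "bcoef w p m = L (pCons 0 (p m) * p m)"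
  unfolding bcoef_def L_def by (simp add: power2_eq_square algebra_simps)

lemma xp0: "L (pCons 0 (p i) * p j) =
   (if i = j then bcoef w p i else if j = Suc i then acoef p j else if i = Suc j then acoef p i else 0)"
proof -
  consider "i = j" | "j = Suc i" | "i = Suc j" | "Suc i < j" | "Suc j < i" by linarith
  then show ?thesis
  proof cases
    case 1 then show ?thesis by (simp add: bL)
  next
    case 2
    have "L (pCons 0 (p i) * p j) = coeff (pCons 0 (p i)) j / gam p j"
      using 2 by (intro L_B) (simp add: degree_pCons_eq_if)
    then show ?thesis using 2 by (simp add: acoef_def)
  next
    case 3
    have "L (pCons 0 (p j) * p i) = coeff (pCons 0 (p j)) i / gam p i"
      using 3 by (intro L_B) (simp add: degree_pCons_eq_if)
    then show ?thesis using 3 by (simp add: acoef_def mult.commute)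
  next
    case 4
    then have "L (pCons 0 (p i) * p j) = 0" by (intro L_A) (simp add: degree_pCons_eq_if)
    then show ?thesis using 4 by simp
  next
    case 5
    then have "L (pCons 0 (p j) * p i) = 0" by (intro L_A) (simp add: degree_pCons_eq_if)
    then show ?thesis using 5 by (simp add: mult.commute)
  qed
qed

lemma xp: "L (pCons 0 (p i * p j)) =
   (if i = j then bcoef w p i else if j = Suc i then acoef p j else if i = Suc j then acoef p i else 0)"
  using xp0[of i j] by simp

lemma rec: "pCons 0 (p n) = smult (acoef p (Suc n)) (p (Suc n)) + smult (bcoef w p n) (p n)
    + smult (aa n) (p (n - 1))"
proof -
  define F where "F = pCons 0 (p n) - (smult (acoef p (Suc n)) (p (Suc n)) + smult (bcoef w p n) (p n)
    + smult (aa n) (p (n - 1)))"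
  have "degree F \<le> n"
  proof (rule degree_le, intro allI impI)
    fix i assume "n < i"
    then obtain j where j: "i = Suc j" "n \<le> j" by (cases i) auto
    show "coeff F i = 0"
    proof (cases "j = n")
      case True
      then show ?thesis using j unfolding F_def by (simp add: acoef_def aa_def)
    next
      case False
      then show ?thesis using j unfolding F_def by (simp add: aa_def)
    qed
  qed
  moreover have "L (F * p k) = 0" if kn: "k \<le> n" for k
  proof -
    have e: "L (F * p k) = L (pCons 0 (p n * p k)) - (acoef p (Suc n) * L (p (Suc n) * p k)
       + bcoef w p n * L (p n * p k) + aa n * L (p (n - 1) * p k))"
      unfolding F_def by (simp only: ring_distribs mult_smult_left mult_pCons_left L_diff L_add L_smult smult_0_left add_0)
    consider "k = n" | "n \<noteq> 0" "k = n - 1" | "k < n - 1" using kn by linarith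
    then show ?thesis
    proof cases
      case 1 then show ?thesis unfolding e by (cases n) (simp_all add: xp L_pp aa_def)
    next
      case 2 then show ?thesis unfolding e by (cases n) (auto simp add: xp L_pp aa_def)
    next
      case 3 then show ?thesis unfolding e by (cases n) (auto simp add: xp L_pp aa_def)
    qed
  qed
  ultimately have "F = 0" by (rule zero_lemma)
  then show ?thesis unfolding F_def by simp
qed

lemma Grel: "G n - G (Suc n) = bcoef w p n"
proof -
  have c: "coeff (pCons 0 (p n)) n = acoef p (Suc n) * coeff (p (Suc n)) n + bcoef w p n * gam p n
     + aa n * coeff (p (n - 1)) n"
    by (subst rec) simp
  show ?thesis
  proof (cases n)
    case 0
    then have h: "0 = gam p 0 / gam p (Suc 0) * coeff (p (Suc 0)) 0 + bcoef w p 0 * gam p 0"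
      using c by (simp add: aa_def acoef_def)
    have "gam p 0 * (coeff (p (Suc 0)) 0 / gam p (Suc 0) + bcoef w p 0) = 0"
      using h by (simp add: algebra_simps)
    then have "coeff (p (Suc 0)) 0 / gam p (Suc 0) + bcoef w p 0 = 0" by simp
    then show ?thesis using 0 by (simp add: G_def)
  next
    case (Suc j)
    then have h: "coeff (p n) j = gam p n / gam p (Suc n) * coeff (p (Suc n)) n + bcoef w p n * gam p n"
      using c by (simp add: acoef_def)
    have "coeff (p n) j / gam p n = coeff (p (Suc n)) n / gam p (Suc n) + bcoef w p n"
      unfolding h by (simp add: field_simps)
    then show ?thesis using Suc by (simp add: G_def)
  qed
qed

lemma rec_eval: "x * poly (p n) x = acoef p (Suc n) * poly (p (Suc n)) x + bcoef w p n * poly (p n) x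
    + aa n * poly (p (n - 1)) x"
  using arg_cong[OF rec, of "\<lambda>q. poly q x"] by simp

lemma nonvanish: "poly (p m) x \<noteq> 0 \<or> poly (p (Suc m)) x \<noteq> 0"
proof (induction m)
  case 0
  then show ?case by (subst (1) p0) simp
next
  case (Suc m)
  show ?case
  proof (rule ccontr)
    assume "\<not> ?case"
    then have "aa (Suc m) * poly (p m) x = 0"
      using rec_eval[of x "Suc m"] by simp
    then have "poly (p m) x = 0" using acoef_pos[of "Suc m"] by (simp add: aa_def)
    then show False using Suc.IH \<open>\<not> ?case\<close> by simp
  qed
qed

end



lemma peval: "(\<And>x. poly a x = poly b x) \<Longrightarrow> a = (b::real poly)"
  by (metis poly_eq_poly_eq_iff ext)

locale semi = osys w p for w p +
  fixes t \<alpha> \<mu> :: real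
  assumes ibp: "\<And>q. L (pderiv ([:0, -t, 1:] * q) + q * [:-\<mu>*t, \<alpha>+\<mu>+t, -1:]) = 0"
begin

definition D :: "nat \<Rightarrow> real poly" where
  "D m = [:0, -t, 1:] * pderiv (p m)"

abbreviation "cc \<equiv> 2 + \<alpha> + \<mu> + t"

lemma L_pC: "L (pCons 0 (q + r)) = L (pCons 0 q) + L (pCons 0 r)"
  by (metis L_add add_pCons add_0_left)

lemma ibp2: "L ([:0, -t, 1:] * pderiv q) =
   (t + \<mu> * t) * L q - cc * L (pCons 0 q) + L (pCons 0 (pCons 0 q))"
proof -
  have e: "pderiv ([:0, -t, 1:] * q) + q * [:-\<mu>*t, \<alpha>+\<mu>+t, -1:] =
     [:0, -t, 1:] * pderiv q + (smult (-(t + \<mu> * t)) q + (smult cc (pCons 0 q) - pCons 0 (pCons 0 q)))"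
    by (rule peval) (simp add: pderiv_mult pderiv_pCons pderiv_diff pderiv_smult pderiv_add algebra_simps)
  have "0 = L ([:0, -t, 1:] * pderiv q) + (-(t + \<mu> * t) * L q + (cc * L (pCons 0 q) - L (pCons 0 (pCons 0 q))))"
    using ibp[of q] unfolding e by (simp only: L_add L_diff L_smult)
  then show ?thesis unfolding D_def by (simp add: algebra_simps)
qed

lemma ibp3: "L (D m * p k) = - L (D k * p m) + (t + \<mu> * t) * L (p m * p k)
   - cc * L (pCons 0 (p m * p k)) + L (pCons 0 (pCons 0 (p m * p k)))"
proof -
  have e: "[:0, -t, 1:] * pderiv (p m * p k) = D m * p k + D k * p m"
    unfolding D_def by (simp add: pderiv_mult algebra_simps)
  show ?thesis using ibp2[of "p m * p k"] unfolding e by (simp add: L_add)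
qed

lemma D_coeff0: "coeff (D m) 0 = 0"
  unfolding D_def by simp

lemma D_coeff1: "coeff (D m) (Suc 0) = - t * coeff (p m) (Suc 0)"
  unfolding D_def by (simp add: coeff_pderiv)

lemma D_coeff2: "coeff (D m) (Suc (Suc j)) = real (Suc j) * coeff (p m) (Suc j) - t * real (Suc (Suc j)) * coeff (p m) (Suc (Suc j))"
  unfolding D_def by (simp add: coeff_pderiv algebra_simps)

lemma D_deg: "degree (D m) \<le> Suc m"
proof (rule degree_le, intro allI impI)
  fix i assume "Suc m < i"
  then obtain j where "i = Suc (Suc j)" "m \<le> j" by (cases i; cases "i - 1") auto
  then show "coeff (D m) i = 0" by (simp add: D_coeff2)
qed

lemma D_top: "coeff (D m) (Suc m) = real m * gam p m"
  by (cases m) (simp_all add: D_coeff1 D_coeff2)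


lemma D_mid: "coeff (D m) m = (real m - 1) * G m * gam p m - t * real m * gam p m"
proof (cases m)
  case 0 then show ?thesis by (simp add: D_coeff0 G_def)
next
  case (Suc k)
  show ?thesis
  proof (cases k)
    case 0 then show ?thesis using Suc by (simp add: D_coeff1)
  next
    case (Suc j)
    then show ?thesis using \<open>m = Suc k\<close> by (simp add: D_coeff2 G_def field_simps)
  qed
qed

lemma LDmm: "L (D m * p m) = real m * bcoef w p m - G m - t * real m"
proof -
  have "L (D m * p m) = (coeff (D m) m - coeff (D m) (Suc m) * (coeff (p (Suc m)) m / gam p (Suc m))) / gam p m"
    using D_deg by (rule L_C)
  also have "coeff (p (Suc m)) m / gam p (Suc m) = G (Suc m)" by (simp add: G_def)
  also have "G (Suc m) = G m - bcoef w p m" using Grel[of m] by simp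
  also have "coeff (D m) m - coeff (D m) (Suc m) * (G m - bcoef w p m) =
      gam p m * (real m * bcoef w p m - G m - t * real m)"
    by (simp add: D_mid D_top algebra_simps)
  finally show ?thesis by simp
qed

lemma L_pCs: "L (pCons 0 (smult c q)) = c * L (pCons 0 q)"
proof -
  have "pCons 0 (smult c q) = smult c (pCons 0 q)" by simp
  then show ?thesis by (simp only: L_smult)
qed

lemma X2mm: "L (pCons 0 (pCons 0 (p m * p m))) = (acoef p (Suc m))^2 + (bcoef w p m)^2 + (aa m)^2"
proof -
  have "L (pCons 0 (pCons 0 (p m * p m))) = L (pCons 0 (p m * pCons 0 (p m)))" by simp
  also have "\<dots> = L (pCons 0 (smult (acoef p (Suc m)) (p m * p (Suc m)) + smult (bcoef w p m) (p m * p m)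
       + smult (aa m) (p m * p (m - 1))))"
    by (subst rec) (simp only: ring_distribs mult_smult_right)
  also have "\<dots> = acoef p (Suc m) * L (pCons 0 (p m * p (Suc m))) + bcoef w p m * L (pCons 0 (p m * p m))
       + aa m * L (pCons 0 (p m * p (m - 1)))"
    by (simp only: L_pC L_pCs)
  also have "\<dots> = (acoef p (Suc m))^2 + (bcoef w p m)^2 + (aa m)^2"
    by (cases m) (simp_all add: xp aa_def power2_eq_square)
  finally show ?thesis .
qed

lemma E1: "2 * (real m * bcoef w p m - G m - t * real m) = (t + \<mu> * t) - cc * bcoef w p m
    + (acoef p (Suc m))^2 + (bcoef w p m)^2 + (aa m)^2"
  using ibp3[of m m] by (simp add: LDmm L_pp xp X2mm)

definition kap :: "nat \<Rightarrow> real" where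
  "kap m = (real m + \<mu> / 2) * t + (aa m)^2 + G m"

definition th :: "nat \<Rightarrow> real" where
  "th m = bcoef w p m - 2 * real m - 1 - \<alpha> - \<mu> - t"

lemma E1': "kap (Suc m) + kap m = - th m * bcoef w p m"
proof -
  have "G (Suc m) = G m - bcoef w p m" using Grel[of m] by simp
  then show ?thesis using E1[of m] unfolding kap_def th_def
    by (simp add: aa_def algebra_simps power2_eq_square)
qed

lemma pnz[simp]: "p k \<noteq> 0"
proof
  assume "p k = 0"
  then have "gam p k = 0" by (simp add: gam_def)
  then show False by simp
qed

definition beta :: "nat \<Rightarrow> real" where
  "beta n = \<mu> * t / 2 - kap n"

lemma LDkn: "k < n \<Longrightarrow> L (D k * p n) = (if Suc k = n then real k * acoef p n else 0)"
proof -
  assume kn: "k < n"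
  have "degree (D k) \<le> n" using D_deg[of k] kn by simp
  then have "L (D k * p n) = coeff (D k) n / gam p n" by (rule L_B)
  moreover have "coeff (D k) n = (if Suc k = n then real k * gam p k else 0)"
    using D_top[of k] D_deg[of k] kn by (auto simp: coeff_eq_0)
  ultimately show ?thesis using kn by (auto simp: acoef_def)
qed

lemma X2kn: "k < n \<Longrightarrow> L (pCons 0 (pCons 0 (p n * p k))) =
   (if Suc k = n then acoef p n * (bcoef w p k + bcoef w p n)
    else if Suc (Suc k) = n then acoef p n * acoef p (n - 1) else 0)"
proof -
  assume kn: "k < n"
  define r where "r = pCons 0 (pCons 0 (p k))"
  have e: "pCons 0 (pCons 0 (p n * p k)) = r * p n" unfolding r_def by (simp add: mult.commute)
  have dr: "degree r = Suc (Suc k)" unfolding r_def by (simp add: degree_pCons_eq_if)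
  consider "Suc k = n" | "Suc (Suc k) = n" | "Suc (Suc k) < n" using kn by linarith
  then show ?thesis
  proof cases
    case 1
    then have "L (r * p n) = (coeff r n - coeff r (Suc n) * (coeff (p (Suc n)) n / gam p (Suc n))) / gam p n"
      using dr by (intro L_C) simp
    moreover have "coeff r n = G k * gam p k" using 1 unfolding r_def G_def by (cases k) auto
    moreover have "coeff r (Suc n) = gam p k" unfolding r_def by (subst 1[symmetric]) simp
    moreover have "coeff (p (Suc n)) n / gam p (Suc n) = G (Suc n)" by (simp add: G_def)
    moreover have "G k - G (Suc n) = bcoef w p k + bcoef w p n"
      using Grel[of k] Grel[of n] 1 by simp
    ultimately show ?thesis using 1 unfolding e by (auto simp: acoef_def field_simps)
  next
    case 2
    then have "L (r * p n) = coeff r n / gam p n" using dr by (intro L_B) simp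
    moreover have "coeff r n = gam p k" using 2 unfolding r_def by auto
    ultimately show ?thesis using 2 unfolding e by (auto simp: acoef_def)
  next
    case 3
    then show ?thesis unfolding e using dr by (simp add: L_A)
  qed
qed

lemma lower: assumes "1 \<le> n"
  shows "D n = smult (beta n) (p n) + smult (real n) (pCons 0 (p n))
     + smult (acoef p n) (smult (th n) (p (n - 1)) + pCons 0 (p (n - 1)))"
proof -
  obtain j where nj: "n = Suc j" using assms by (cases n) auto
  define F where "F = D n - (smult (beta n) (p n) + smult (real n) (pCons 0 (p n))
     + smult (acoef p n) (smult (th n) (p (n - 1)) + pCons 0 (p (n - 1))))"
  have "degree F \<le> j"
  proof (rule degree_le, intro allI impI)
    fix i assume ij: "j < i"
    consider "i = n" | "i = Suc n" | "Suc n < i" using ij nj by linarith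
    then show "coeff F i = 0"
    proof cases
      case 1
      have g: "coeff (p n) j = G n * gam p n" using nj by (simp add: G_def)
      have a: "acoef p n * gam p n = gam p j" using nj by (simp add: acoef_def)
      have "coeff F i = coeff (D n) n - beta n * gam p n - real n * coeff (p n) j - acoef p n * gam p j"
        unfolding F_def using 1 nj by simp
      also have "\<dots> = acoef p n * (acoef p n * gam p n - gam p j)"
        unfolding g D_mid beta_def kap_def using nj by (simp add: aa_def algebra_simps power2_eq_square)
      also have "\<dots> = 0" using a by simp
      finally show ?thesis .
    next
      case 2
      then show ?thesis unfolding F_def using nj by (simp add: D_top)
    next
      case 3
      then obtain i' where "i = Suc i'" "n < i'" by (cases i) auto
      moreover have "coeff (D n) i = 0" using D_deg[of n] 3 by (simp add: coeff_eq_0)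
      ultimately show ?thesis unfolding F_def using nj by simp
    qed
  qed
  moreover have "L (F * p k) = 0" if kj: "k \<le> j" for k
  proof -
    have e: "L (F * p k) = L (D n * p k) - (beta n * L (p n * p k) + real n * L (pCons 0 (p n * p k))
       + acoef p n * (th n * L (p j * p k) + L (pCons 0 (p j * p k))))"
      unfolding F_def using nj
      by (simp only: ring_distribs mult_smult_left mult_pCons_left L_diff L_add L_smult smult_0_left add_0 diff_Suc_1)
    have e2: "L (D n * p k) = - L (D k * p n) + (t + \<mu> * t) * L (p n * p k)
       - cc * L (pCons 0 (p n * p k)) + L (pCons 0 (pCons 0 (p n * p k)))"
      by (rule ibp3)
    have kn: "k < n" using kj nj by simp
    consider "k = j" | "j \<noteq> 0" "k = j - 1" | "k < j - 1" using kj by linarith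
    then show ?thesis
    proof cases
      case 1
      have h1: "L (D k * p n) = real k * acoef p n" using LDkn[OF kn] 1 nj by simp
      have h2: "L (pCons 0 (pCons 0 (p n * p k))) = acoef p n * (bcoef w p k + bcoef w p n)"
        using X2kn[OF kn] 1 nj by simp
      have h3: "L (pCons 0 (p n * p k)) = acoef p n" using xp[of n k] 1 nj by simp
      have h4: "L (p n * p k) = 0" "L (p j * p k) = 1" "L (pCons 0 (p j * p k)) = bcoef w p j"
        using 1 nj by (simp_all add: L_pp xp)
      show ?thesis unfolding e e2 h1 h2 h3 h4 using 1 nj
        by (simp add: th_def algebra_simps)
    next
      case 2
      then have jk: "j = Suc k" by simp
      then have "L (pCons 0 (p j * p k)) = acoef p j" using xp[of "Suc k" k] by simp
      then show ?thesis unfolding e e2 using kn nj 2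
        by (simp add: LDkn X2kn xp L_pp)
    next
      case 3
      then have "k \<noteq> j" "Suc k \<noteq> j" "Suc k \<noteq> n" "Suc (Suc k) \<noteq> n" "k \<noteq> n"
          "j \<noteq> Suc k" "n \<noteq> Suc k" "j \<noteq> k" "n \<noteq> k" using nj by auto
      then show ?thesis unfolding e e2 using kn nj
        by (simp add: LDkn X2kn xp L_pp)
    qed
  qed
  ultimately have "F = 0" by (rule zero_lemma)
  then show ?thesis unfolding F_def by simp
qed

lemma lower_eval:
  assumes x: "x = 0 \<or> x = t"
  shows "0 = (beta m + real m * x) * poly (p m) x + aa m * (th m + x) * poly (p (m - 1)) x"
proof (cases m)
  case 0
  then show ?thesis by (simp add: beta_def kap_def aa_def G_def)
next
  case (Suc j)
  have "poly (D m) x = 0" unfolding D_def using x by auto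
  then show ?thesis using Suc arg_cong[OF lower[of m], of "\<lambda>q. poly q x"]
    by (simp add: aa_def algebra_simps)
qed

lemma det: "0 = u * P + v * Q \<Longrightarrow> 0 = r * P + s * Q \<Longrightarrow> P \<noteq> 0 \<or> Q \<noteq> 0 \<Longrightarrow> u * s - v * r = (0::real)"
proof -
  assume a: "0 = u * P + v * Q" "0 = r * P + s * Q" "P \<noteq> 0 \<or> Q \<noteq> 0"
  have "(u * s - v * r) * P = s * (u * P + v * Q) - v * (r * P + s * Q)" by (simp add: algebra_simps)
  moreover have "(u * s - v * r) * Q = u * (r * P + s * Q) - r * (u * P + v * Q)" by (simp add: algebra_simps)
  ultimately show ?thesis using a by auto
qed

lemma main_det:
  assumes n: "1 \<le> n" and x: "x = 0 \<or> x = t"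
  shows "(beta n + real n * x) * (beta (n - 1) + real (n - 1) * x + (th (n - 1) + x) * (x - bcoef w p (n - 1)))
     + (acoef p n)^2 * (th n + x) * (th (n - 1) + x) = 0"
proof -
  define P where "P = poly (p n) x"
  define Q where "Q = poly (p (n - 1)) x"
  define R where "R = poly (p (n - 1 - 1)) x"
  have sn: "Suc (n - 1) = n" using n by simp
  have e1: "0 = (beta n + real n * x) * P + (acoef p n * (th n + x)) * Q"
    using lower_eval[OF x, of n] n unfolding P_def Q_def by (simp add: aa_def algebra_simps)
  have e2: "0 = (beta (n - 1) + real (n - 1) * x) * Q + (th (n - 1) + x) * (aa (n - 1) * R)"
    using lower_eval[OF x, of "n - 1"] unfolding Q_def R_def by (simp add: algebra_simps)
  have r: "aa (n - 1) * R = x * Q - acoef p n * P - bcoef w p (n - 1) * Q"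
    using rec_eval[of x "n - 1"] unfolding sn P_def Q_def R_def by simp
  have e2': "0 = (- (acoef p n * (th (n - 1) + x))) * P
      + (beta (n - 1) + real (n - 1) * x + (th (n - 1) + x) * (x - bcoef w p (n - 1))) * Q"
    using e2 unfolding r by (simp add: algebra_simps)
  have nv: "P \<noteq> 0 \<or> Q \<noteq> 0" using nonvanish[of "n - 1" x] unfolding sn P_def Q_def by auto
  from det[OF e1 e2' nv] show ?thesis by (simp add: algebra_simps power2_eq_square)
qed

lemma final0: assumes n: "1 \<le> n"
  shows "(acoef p n)^2 * (th n * th (n - 1)) = (kap n)^2 - \<mu>^2 * t^2 / 4"
proof -
  have k: "kap (n - 1) = - th (n - 1) * bcoef w p (n - 1) - kap n"
    using E1'[of "n - 1"] n by simp
  have h: "(beta n + real n * 0) * (beta (n - 1) + real (n - 1) * 0 + (th (n - 1) + 0) * (0 - bcoef w p (n - 1)))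
     + (acoef p n)^2 * (th n + 0) * (th (n - 1) + 0) = 0" by (rule main_det[OF n]) simp
  have "(acoef p n)^2 * (th n * th (n - 1)) - ((kap n)^2 - \<mu>^2 * t^2 / 4) =
     (beta n + real n * 0) * (beta (n - 1) + real (n - 1) * 0 + (th (n - 1) + 0) * (0 - bcoef w p (n - 1)))
     + (acoef p n)^2 * (th n + 0) * (th (n - 1) + 0)"
    unfolding beta_def k by (simp add: algebra_simps power2_eq_square)
  then show ?thesis using h by simp
qed

lemma finalt: assumes n: "1 \<le> n"
  shows "(acoef p n)^2 * ((th n + t) * (th (n - 1) + t)) =
     (kap n - (real n + \<mu> / 2) * t) * (kap n - (real n + \<alpha> + \<mu> / 2) * t)"
proof -
  have k: "kap (n - 1) = - th (n - 1) * bcoef w p (n - 1) - kap n"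
    using E1'[of "n - 1"] n by simp
  have rn: "real (n - 1) = real n - 1" using n by simp
  have tn: "th (n - 1) = bcoef w p (n - 1) - 2 * real n + 1 - \<alpha> - \<mu> - t"
    using n unfolding th_def by simp
  have h: "(beta n + real n * t) * (beta (n - 1) + real (n - 1) * t + (th (n - 1) + t) * (t - bcoef w p (n - 1)))
     + (acoef p n)^2 * (th n + t) * (th (n - 1) + t) = 0" by (rule main_det[OF n]) simp
  have "(acoef p n)^2 * ((th n + t) * (th (n - 1) + t)) -
     (kap n - (real n + \<mu> / 2) * t) * (kap n - (real n + \<alpha> + \<mu> / 2) * t) =
     (beta n + real n * t) * (beta (n - 1) + real (n - 1) * t + (th (n - 1) + t) * (t - bcoef w p (n - 1)))
     + (acoef p n)^2 * (th n + t) * (th (n - 1) + t)"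
    unfolding beta_def k rn tn by (simp add: algebra_simps power2_eq_square)
  then show ?thesis using h by simp
qed

end



lemma polylim: "((\<lambda>x::real. poly q x * x powr b * exp (-x)) \<longlongrightarrow> 0) at_top"
proof (induction q arbitrary: b rule: pCons_induct)
  case 0
  then show ?case by simp
next
  case (pCons a q)
  have l1: "((\<lambda>x::real. a * (x powr b * exp (-x))) \<longlongrightarrow> a * 0) at_top"
    by (intro tendsto_mult tendsto_const) real_asymp
  have l2: "((\<lambda>x::real. poly q x * x powr (b + 1) * exp (-x)) \<longlongrightarrow> 0) at_top"
    by (rule pCons.IH)
  have "((\<lambda>x::real. a * (x powr b * exp (-x)) + poly q x * x powr (b + 1) * exp (-x)) \<longlongrightarrow> a * 0 + 0) at_top"
    by (intro tendsto_add l1 l2)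
  moreover have "eventually (\<lambda>x::real. a * (x powr b * exp (-x)) + poly q x * x powr (b + 1) * exp (-x)
     = poly (pCons a q) x * x powr b * exp (-x)) at_top"
    using eventually_gt_at_top[of 0]
    by eventually_elim (simp add: powr_add algebra_simps)
  ultimately show ?case by (simp add: tendsto_cong)
qed


lemma int_bound:
  fixes f F :: "real \<Rightarrow> real"
  assumes int: "set_integrable lborel {a<..<b} f"
    and nn: "\<And>x. a < x \<Longrightarrow> x < b \<Longrightarrow> 0 \<le> f x"
    and der: "\<And>x. a < x \<Longrightarrow> x < b \<Longrightarrow> DERIV F x :> f x"
    and cont: "\<And>x. a < x \<Longrightarrow> x < b \<Longrightarrow> isCont f x"
    and c: "a < c" "c \<le> d" "d < b"
  shows "F d - F c \<le> (LINT x:{a<..<b}|lborel. f x)"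
proof -
  have "integral\<^sup>L lborel (\<lambda>x. indicator {c..d} x *\<^sub>R f x) = F d - F c"
  proof (rule integral_FTC_atLeastAtMost)
    show "c \<le> d" using c by simp
    show "(F has_vector_derivative f x) (at x within {c..d})" if "c \<le> x" "x \<le> d" for x
      using der[of x] that c
      by (auto simp: has_real_derivative_iff_has_vector_derivative[symmetric] intro: has_field_derivative_at_within)
    show "continuous_on {c..d} f"
      using cont c by (intro continuous_at_imp_continuous_on) auto
  qed
  moreover have "integral\<^sup>L lborel (\<lambda>x. indicator {c..d} x *\<^sub>R f x)
      \<le> integral\<^sup>L lborel (\<lambda>x. indicator {a<..<b} x *\<^sub>R f x)"
  proof (rule integral_mono)
    have "set_integrable lborel {c..d} f"
      by (rule set_integrable_subset[OF int]) (use c in auto)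
    then show "integrable lborel (\<lambda>x. indicator {c..d} x *\<^sub>R f x)"
      by (simp add: set_integrable_def)
    show "integrable lborel (\<lambda>x. indicator {a<..<b} x *\<^sub>R f x)"
      using int by (simp add: set_integrable_def)
    show "indicator {c..d} x *\<^sub>R f x \<le> indicator {a<..<b} x *\<^sub>R f x" for x
      using c nn[of x] by (auto split: split_indicator)
  qed
  ultimately show ?thesis by (simp add: set_lebesgue_integral_def)
qed

lemma nonint_left: "a < b \<Longrightarrow> \<not> set_integrable lborel {a<..<b} (\<lambda>x::real. 1 / (x - a))"
proof
  assume ab: "a < b" and int: "set_integrable lborel {a<..<b} (\<lambda>x::real. 1 / (x - a))"
  define I where "I = (LINT x:{a<..<b}|lborel. 1 / (x - a))"
  define d where "d = (a + b) / 2"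
  define c where "c = a + (d - a) * exp (- \<bar>I\<bar> - 1)"
  have e1: "exp (- \<bar>I\<bar> - 1) < 1" by simp
  have dpos: "d - a > 0" using ab unfolding d_def by simp
  have ac: "a < c" unfolding c_def using dpos by simp
  have cd: "c \<le> d" unfolding c_def using dpos e1
    by (smt (verit) mult_less_cancel_left2)
  have db: "d < b" using ab unfolding d_def by simp
  have "ln (d - a) - ln (c - a) \<le> I" unfolding I_def
  proof (rule int_bound[OF int _ _ _ ac cd db])
    show "0 \<le> 1 / (x - a)" if "a < x" "x < b" for x using that by simp
    show "DERIV (\<lambda>x. ln (x - a)) x :> 1 / (x - a)" if "a < x" "x < b" for x
      using that by (auto intro!: derivative_eq_intros)
    show "isCont (\<lambda>x. 1 / (x - a)) x" if "a < x" "x < b" for x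
      using that by (auto intro!: continuous_intros)
  qed
  moreover have "ln (c - a) = ln (d - a) + (- \<bar>I\<bar> - 1)"
    unfolding c_def using dpos by (simp add: ln_mult)
  ultimately show False by linarith
qed

lemma nonint_right: "a < b \<Longrightarrow> \<not> set_integrable lborel {a<..<b} (\<lambda>x::real. 1 / (b - x))"
proof
  assume ab: "a < b" and int: "set_integrable lborel {a<..<b} (\<lambda>x::real. 1 / (b - x))"
  define I where "I = (LINT x:{a<..<b}|lborel. 1 / (b - x))"
  define c where "c = (a + b) / 2"
  define d where "d = b - (b - c) * exp (- \<bar>I\<bar> - 1)"
  have e1: "exp (- \<bar>I\<bar> - 1) < 1" by simp
  have cpos: "b - c > 0" using ab unfolding c_def by simp
  have db: "d < b" unfolding d_def using cpos by simp
  have cd: "c \<le> d" unfolding d_def using cpos e1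
    by (smt (verit) mult_less_cancel_left2)
  have ac: "a < c" using ab unfolding c_def by simp
  have "(- ln (b - d)) - (- ln (b - c)) \<le> I" unfolding I_def
  proof (rule int_bound[OF int _ _ _ ac cd db])
    show "0 \<le> 1 / (b - x)" if "a < x" "x < b" for x using that by simp
    show "DERIV (\<lambda>x. - ln (b - x)) x :> 1 / (b - x)" if "a < x" "x < b" for x
      using that by (auto intro!: derivative_eq_intros simp: field_simps)
    show "isCont (\<lambda>x. 1 / (b - x)) x" if "a < x" "x < b" for x
      using that by (auto intro!: continuous_intros)
  qed
  moreover have "ln (b - d) = ln (b - c) + (- \<bar>I\<bar> - 1)"
    unfolding d_def using cpos by (simp add: ln_mult)
  ultimately show False by linarith
qed

lemma powr_ge_min: "0 < a \<Longrightarrow> a \<le> y \<Longrightarrow> y \<le> b \<Longrightarrow> min (a powr r) (b powr r) \<le> y powr (r::real)"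
proof (cases "r \<ge> 0")
  case True
  assume "0 < a" "a \<le> y" "y \<le> b"
  then have "a powr r \<le> y powr r" using True by (intro powr_mono2) auto
  then show ?thesis by simp
next
  case False
  assume "0 < a" "a \<le> y" "y \<le> b"
  then have "b powr r \<le> y powr r" using False by (intro powr_mono2') auto
  then show ?thesis by simp
qed

lemma powr_ge_inv: "0 < y \<Longrightarrow> y \<le> 1 \<Longrightarrow> r \<le> -1 \<Longrightarrow> 1 / y \<le> y powr (r::real)"
  using powr_mono'[of r "-1" y] by (simp add: powr_neg_one)

locale ana = osys "wgt \<zeta> t \<alpha> \<mu>" p for \<zeta> t \<alpha> \<mu> :: real and p +
  assumes z: "\<zeta> < 1" and tp: "t > 0"
begin

lemma w_left: "0 < x \<Longrightarrow> x < t \<Longrightarrow> wgt \<zeta> t \<alpha> \<mu> x = (t - x) powr \<alpha> * x powr \<mu> * exp (-x)"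
  by (simp add: wgt_def heaviside_def abs_if)

lemma w_right: "t < x \<Longrightarrow> wgt \<zeta> t \<alpha> \<mu> x = (1 - \<zeta>) * ((x - t) powr \<alpha> * x powr \<mu> * exp (-x))"
  by (simp add: wgt_def heaviside_def abs_if)

lemma w_int: "set_integrable lborel {0<..} (wgt \<zeta> t \<alpha> \<mu>)"
  using int_poly[of 1] by simp

lemma mu_gt: "\<mu> > -1"
proof (rule ccontr)
  assume "\<not> \<mu> > -1"
  then have mu: "\<mu> \<le> -1" by simp
  define \<delta> where "\<delta> = min 1 (t / 2)"
  have dpos: "\<delta> > 0" using tp unfolding \<delta>_def by simp
  define K where "K = min ((t / 2) powr \<alpha>) (t powr \<alpha>) * exp (-1)"
  have Kpos: "K > 0" unfolding K_def using tp by simp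
  have bound: "1 / x \<le> wgt \<zeta> t \<alpha> \<mu> x / K" if "0 < x" "x < \<delta>" for x
  proof -
    have xt: "x < t" "x \<le> t / 2" "x \<le> 1" using that tp unfolding \<delta>_def by auto
    have a1: "min ((t / 2) powr \<alpha>) (t powr \<alpha>) \<le> (t - x) powr \<alpha>"
      using xt tp that by (intro powr_ge_min) auto
    have a2: "1 / x \<le> x powr \<mu>" using that xt mu by (intro powr_ge_inv) auto
    have a3: "exp (-1) \<le> exp (-x)" using xt by simp
    have "K * (1 / x) \<le> (min ((t / 2) powr \<alpha>) (t powr \<alpha>) * exp (-1)) * x powr \<mu>"
      unfolding K_def using a2 Kpos by (intro mult_left_mono) (auto simp: K_def)
    also have "\<dots> \<le> ((t - x) powr \<alpha> * exp (-x)) * x powr \<mu>"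
      using a1 a3 by (intro mult_right_mono mult_mono) auto
    also have "\<dots> = wgt \<zeta> t \<alpha> \<mu> x" using w_left[OF that(1) xt(1)] by simp
    finally show ?thesis using Kpos by (simp add: field_simps)
  qed
  have "set_integrable lborel {0<..<\<delta>} (\<lambda>x. wgt \<zeta> t \<alpha> \<mu> x / K)"
    by (rule set_integrable_divide, rule set_integrable_subset[OF w_int]) auto
  then have "set_integrable lborel {0<..<\<delta>} (\<lambda>x. 1 / (x - 0))"
  proof (rule set_integrable_bound)
    show "set_borel_measurable lborel {0<..<\<delta>} (\<lambda>x. 1 / (x - 0))"
      unfolding set_borel_measurable_def by measurable
    show "AE x in lborel. x \<in> {0<..<\<delta>} \<longrightarrow> norm (1 / (x - 0)) \<le> norm (wgt \<zeta> t \<alpha> \<mu> x / K)"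
    proof (rule AE_I2, rule impI)
      fix x assume "x \<in> {0<..<\<delta>}"
      then have x: "0 < x" "x < \<delta>" by auto
      have "norm (1 / (x - 0)) = 1 / x" using x by simp
      moreover have "wgt \<zeta> t \<alpha> \<mu> x / K \<le> norm (wgt \<zeta> t \<alpha> \<mu> x / K)" unfolding real_norm_def by (rule abs_ge_self)
      ultimately show "norm (1 / (x - 0)) \<le> norm (wgt \<zeta> t \<alpha> \<mu> x / K)" using bound[OF x] by linarith
    qed
  qed
  then show False using nonint_left[OF dpos] by simp
qed

lemma al_gt: "\<alpha> > -1"
proof (rule ccontr)
  assume "\<not> \<alpha> > -1"
  then have al: "\<alpha> \<le> -1" by simp
  define \<delta> where "\<delta> = min 1 (t / 2)"
  have dpos: "\<delta> > 0" using tp unfolding \<delta>_def by simp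
  define K where "K = min ((t / 2) powr \<mu>) (t powr \<mu>) * exp (-t)"
  have Kpos: "K > 0" unfolding K_def using tp by simp
  have bound: "1 / (t - x) \<le> wgt \<zeta> t \<alpha> \<mu> x / K" if "t - \<delta> < x" "x < t" for x
  proof -
    have xt: "0 < x" "t / 2 \<le> x" "t - x \<le> 1" using that tp unfolding \<delta>_def by auto
    have a1: "min ((t / 2) powr \<mu>) (t powr \<mu>) \<le> x powr \<mu>"
      using xt tp that by (intro powr_ge_min) auto
    have a2: "1 / (t - x) \<le> (t - x) powr \<alpha>" using that xt al by (intro powr_ge_inv) auto
    have a3: "exp (-t) \<le> exp (-x)" using that by simp
    have "K * (1 / (t - x)) \<le> (min ((t / 2) powr \<mu>) (t powr \<mu>) * exp (-t)) * (t - x) powr \<alpha>"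
      unfolding K_def using a2 Kpos by (intro mult_left_mono) (auto simp: K_def)
    also have "\<dots> \<le> (x powr \<mu> * exp (-x)) * (t - x) powr \<alpha>"
      using a1 a3 by (intro mult_right_mono mult_mono) auto
    also have "\<dots> = wgt \<zeta> t \<alpha> \<mu> x" using w_left[OF xt(1) that(2)] by simp
    finally show ?thesis using Kpos by (simp add: field_simps)
  qed
  have "set_integrable lborel {t - \<delta><..<t} (\<lambda>x. wgt \<zeta> t \<alpha> \<mu> x / K)"
    by (rule set_integrable_divide, rule set_integrable_subset[OF w_int]) (use dpos tp in \<open>auto simp: \<delta>_def\<close>)
  then have "set_integrable lborel {t - \<delta><..<t} (\<lambda>x. 1 / (t - x))"
  proof (rule set_integrable_bound)
    show "set_borel_measurable lborel {t - \<delta><..<t} (\<lambda>x. 1 / (t - x))"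
      unfolding set_borel_measurable_def by measurable
    show "AE x in lborel. x \<in> {t - \<delta><..<t} \<longrightarrow> norm (1 / (t - x)) \<le> norm (wgt \<zeta> t \<alpha> \<mu> x / K)"
    proof (rule AE_I2, rule impI)
      fix x assume "x \<in> {t - \<delta><..<t}"
      then have x: "t - \<delta> < x" "x < t" by auto
      have "norm (1 / (t - x)) = 1 / (t - x)" using x by simp
      moreover have "wgt \<zeta> t \<alpha> \<mu> x / K \<le> norm (wgt \<zeta> t \<alpha> \<mu> x / K)" unfolding real_norm_def by (rule abs_ge_self)
      ultimately show "norm (1 / (t - x)) \<le> norm (wgt \<zeta> t \<alpha> \<mu> x / K)" using bound[OF x] by linarith
    qed
  qed
  then show False using nonint_right[of "t - \<delta>" t] dpos by simp
qed

lemma wL_deriv: "0 < x \<Longrightarrow> x < t \<Longrightarrow>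
  DERIV (\<lambda>y. (t - y) powr \<alpha> * y powr \<mu> * exp (-y)) x :>
    (t - x) powr \<alpha> * x powr \<mu> * exp (-x) * (\<alpha> / (x - t) + \<mu> / x - 1)"
  by (auto intro!: derivative_eq_intros simp: powr_diff field_simps)

lemma wR0_deriv: "t < x \<Longrightarrow>
  DERIV (\<lambda>y. (y - t) powr \<alpha> * y powr \<mu> * exp (-y)) x :>
    (x - t) powr \<alpha> * x powr \<mu> * exp (-x) * (\<alpha> / (x - t) + \<mu> / x - 1)"
  using tp by (auto intro!: derivative_eq_intros simp: powr_diff field_simps)

lemma wR_deriv: "t < x \<Longrightarrow>
  DERIV (\<lambda>y. (1 - \<zeta>) * ((y - t) powr \<alpha> * y powr \<mu> * exp (-y))) x :>
    (1 - \<zeta>) * ((x - t) powr \<alpha> * x powr \<mu> * exp (-x)) * (\<alpha> / (x - t) + \<mu> / x - 1)"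
  using DERIV_cmult[OF wR0_deriv, of x "1 - \<zeta>"] by (simp add: mult.assoc)

lemma w_deriv: assumes "0 < x" "x \<noteq> t"
  shows "DERIV (wgt \<zeta> t \<alpha> \<mu>) x :> wgt \<zeta> t \<alpha> \<mu> x * (\<alpha> / (x - t) + \<mu> / x - 1)"
proof (cases "x < t")
  case True
  have ev: "eventually (\<lambda>y. y \<in> {0<..<t}) (nhds x)"
    using assms True by (intro eventually_nhds_in_open) auto
  have "eventually (\<lambda>y. wgt \<zeta> t \<alpha> \<mu> y = (t - y) powr \<alpha> * y powr \<mu> * exp (-y)) (nhds x)"
    using ev by eventually_elim (auto simp: w_left)
  then show ?thesis
    using wL_deriv[OF assms(1) True] w_left[OF assms(1) True]
    by (subst DERIV_cong_ev[OF refl _ refl]) auto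
next
  case False
  then have xt: "t < x" using assms by simp
  have ev: "eventually (\<lambda>y. y \<in> {t<..}) (nhds x)"
    using xt by (intro eventually_nhds_in_open) auto
  have "eventually (\<lambda>y. wgt \<zeta> t \<alpha> \<mu> y = (1 - \<zeta>) * ((y - t) powr \<alpha> * y powr \<mu> * exp (-y))) (nhds x)"
    using ev by eventually_elim (auto simp: w_right)
  then show ?thesis
    using wR_deriv[OF xt] w_right[OF xt]
    by (subst DERIV_cong_ev[OF refl _ refl]) auto
qed

lemma w_cont: "0 < x \<Longrightarrow> x \<noteq> t \<Longrightarrow> isCont (wgt \<zeta> t \<alpha> \<mu>) x"
  using w_deriv DERIV_isCont by blast

lemma F_deriv: assumes "0 < x" "x \<noteq> t"
  shows "DERIV (\<lambda>y. poly ([:0, -t, 1:] * q) y * wgt \<zeta> t \<alpha> \<mu> y) x :>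
     poly (pderiv ([:0, -t, 1:] * q) + q * [:-\<mu>*t, \<alpha>+\<mu>+t, -1:]) x * wgt \<zeta> t \<alpha> \<mu> x"
proof -
  have "DERIV (\<lambda>y. poly ([:0, -t, 1:] * q) y * wgt \<zeta> t \<alpha> \<mu> y) x :>
     poly (pderiv ([:0, -t, 1:] * q)) x * wgt \<zeta> t \<alpha> \<mu> x
     + poly ([:0, -t, 1:] * q) x * (wgt \<zeta> t \<alpha> \<mu> x * (\<alpha> / (x - t) + \<mu> / x - 1))"
    by (rule DERIV_mult'[OF poly_DERIV w_deriv[OF assms], THEN DERIV_cong]) (simp add: algebra_simps)
  moreover have "poly ([:0, -t, 1:] * q) x * (wgt \<zeta> t \<alpha> \<mu> x * (\<alpha> / (x - t) + \<mu> / x - 1))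
     = poly (q * [:-\<mu>*t, \<alpha>+\<mu>+t, -1:]) x * wgt \<zeta> t \<alpha> \<mu> x"
  proof -
    have "x - t \<noteq> 0" using assms by simp
    then show ?thesis using assms by (simp add: field_simps)
  qed
  then have "poly (pderiv ([:0, -t, 1:] * q)) x * wgt \<zeta> t \<alpha> \<mu> x
     + poly ([:0, -t, 1:] * q) x * (wgt \<zeta> t \<alpha> \<mu> x * (\<alpha> / (x - t) + \<mu> / x - 1))
     = poly (pderiv ([:0, -t, 1:] * q) + q * [:-\<mu>*t, \<alpha>+\<mu>+t, -1:]) x * wgt \<zeta> t \<alpha> \<mu> x"
    by (simp only: poly_add distrib_right)
  ultimately show ?thesis by (rule DERIV_cong)
qed

lemma f_cont: "0 < x \<Longrightarrow> x \<noteq> t \<Longrightarrow> isCont (\<lambda>y. poly r y * wgt \<zeta> t \<alpha> \<mu> y) x"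
  by (intro continuous_intros w_cont) auto

lemma tr: "(f \<longlongrightarrow> a) F \<Longrightarrow> a = b \<Longrightarrow> eventually (\<lambda>x. f x = g x) F \<Longrightarrow> (g \<longlongrightarrow> b) F"
  by (simp add: Lim_transform_eventually)

lemma lim0: "((\<lambda>y. poly ([:0, -t, 1:] * q) y * wgt \<zeta> t \<alpha> \<mu> y) \<longlongrightarrow> 0) (at_right 0)"
proof -
  have e1: "eventually (\<lambda>y. y < t) (at_right (0::real))"
    using order_tendstoD(2)[OF tendsto_ident_at tp] by simp
  have e2: "eventually (\<lambda>y. 0 < y) (at_right (0::real))"
    by (simp add: eventually_at_right_less)
  have ev: "eventually (\<lambda>y. y powr (1 + \<mu>) * (poly ([:-t, 1:] * q) y * (t - y) powr \<alpha> * exp (-y))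
      = poly ([:0, -t, 1:] * q) y * wgt \<zeta> t \<alpha> \<mu> y) (at_right 0)"
    using e1 e2 by eventually_elim (simp add: w_left powr_add)
  have l1: "((\<lambda>y::real. y powr (1 + \<mu>)) \<longlongrightarrow> 0) (at_right 0)"
  proof (rule tendsto_zero_powrI[of "\<lambda>y. y" _ "\<lambda>_. 1 + \<mu>" "1 + \<mu>"])
    show "((\<lambda>y::real. y) \<longlongrightarrow> 0) (at_right 0)" by (rule tendsto_ident_at)
    show "eventually (\<lambda>y. 0 \<le> y) (at_right (0::real))" using e2 by (rule eventually_mono) simp
  qed (use mu_gt in auto)
  have l2: "((\<lambda>y. poly ([:-t, 1:] * q) y * (t - y) powr \<alpha> * exp (-y)) \<longlongrightarrow>
      poly ([:-t, 1:] * q) 0 * (t - 0) powr \<alpha> * exp (-0)) (at_right 0)"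
    using tp by (intro tendsto_intros) auto
  have "((\<lambda>y. y powr (1 + \<mu>) * (poly ([:-t, 1:] * q) y * (t - y) powr \<alpha> * exp (-y))) \<longlongrightarrow>
      0 * (poly ([:-t, 1:] * q) 0 * (t - 0) powr \<alpha> * exp (-0))) (at_right 0)"
    by (rule tendsto_mult[OF l1 l2])
  then show ?thesis by (rule tr[OF _ _ ev]) simp
qed

lemma limtL: "((\<lambda>y. poly ([:0, -t, 1:] * q) y * wgt \<zeta> t \<alpha> \<mu> y) \<longlongrightarrow> 0) (at_left t)"
proof -
  have e1: "eventually (\<lambda>y. 0 < y) (at_left t)"
    using order_tendstoD(1)[OF tendsto_ident_at tp] by simp
  have e2: "eventually (\<lambda>y. y < t) (at_left t)"
    by (simp add: eventually_at_filter)
  have ev: "eventually (\<lambda>y. (t - y) powr (1 + \<alpha>) * (- (poly (pCons 0 q) y * y powr \<mu> * exp (-y)))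
      = poly ([:0, -t, 1:] * q) y * wgt \<zeta> t \<alpha> \<mu> y) (at_left t)"
    using e1 e2 by eventually_elim (simp add: w_left powr_add algebra_simps)
  have l1: "((\<lambda>y::real. (t - y) powr (1 + \<alpha>)) \<longlongrightarrow> 0) (at_left t)"
  proof (rule tendsto_zero_powrI[of "\<lambda>y. t - y" _ "\<lambda>_. 1 + \<alpha>" "1 + \<alpha>"])
    have "((\<lambda>y::real. t - y) \<longlongrightarrow> t - t) (at_left t)" by (intro tendsto_intros)
    then show "((\<lambda>y::real. t - y) \<longlongrightarrow> 0) (at_left t)" by simp
    show "eventually (\<lambda>y. 0 \<le> t - y) (at_left t)" using e2 by (rule eventually_mono) simp
  qed (use al_gt in auto)
  have l2: "((\<lambda>y. - (poly (pCons 0 q) y * y powr \<mu> * exp (-y))) \<longlongrightarrow>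
      - (poly (pCons 0 q) t * t powr \<mu> * exp (-t))) (at_left t)"
    using tp by (intro tendsto_intros) auto
  have "((\<lambda>y. (t - y) powr (1 + \<alpha>) * (- (poly (pCons 0 q) y * y powr \<mu> * exp (-y)))) \<longlongrightarrow>
      0 * (- (poly (pCons 0 q) t * t powr \<mu> * exp (-t)))) (at_left t)"
    by (rule tendsto_mult[OF l1 l2])
  then show ?thesis by (rule tr[OF _ _ ev]) simp
qed

lemma limtR: "((\<lambda>y. poly ([:0, -t, 1:] * q) y * wgt \<zeta> t \<alpha> \<mu> y) \<longlongrightarrow> 0) (at_right t)"
proof -
  have e2: "eventually (\<lambda>y. t < y) (at_right t)"
    by (simp add: eventually_at_right_less)
  have ev: "eventually (\<lambda>y. (y - t) powr (1 + \<alpha>) * ((1 - \<zeta>) * (poly (pCons 0 q) y * y powr \<mu> * exp (-y)))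
      = poly ([:0, -t, 1:] * q) y * wgt \<zeta> t \<alpha> \<mu> y) (at_right t)"
    using e2 by eventually_elim (simp add: w_right powr_add algebra_simps)
  have l1: "((\<lambda>y::real. (y - t) powr (1 + \<alpha>)) \<longlongrightarrow> 0) (at_right t)"
  proof (rule tendsto_zero_powrI[of "\<lambda>y. y - t" _ "\<lambda>_. 1 + \<alpha>" "1 + \<alpha>"])
    have "((\<lambda>y::real. y - t) \<longlongrightarrow> t - t) (at_right t)" by (intro tendsto_intros)
    then show "((\<lambda>y::real. y - t) \<longlongrightarrow> 0) (at_right t)" by simp
    show "eventually (\<lambda>y. 0 \<le> y - t) (at_right t)" using e2 by (rule eventually_mono) simp
  qed (use al_gt in auto)
  have l2: "((\<lambda>y. (1 - \<zeta>) * (poly (pCons 0 q) y * y powr \<mu> * exp (-y))) \<longlongrightarrow>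
      (1 - \<zeta>) * (poly (pCons 0 q) t * t powr \<mu> * exp (-t))) (at_right t)"
    using tp by (intro tendsto_intros) auto
  have "((\<lambda>y. (y - t) powr (1 + \<alpha>) * ((1 - \<zeta>) * (poly (pCons 0 q) y * y powr \<mu> * exp (-y)))) \<longlongrightarrow>
      0 * ((1 - \<zeta>) * (poly (pCons 0 q) t * t powr \<mu> * exp (-t)))) (at_right t)"
    by (rule tendsto_mult[OF l1 l2])
  then show ?thesis by (rule tr[OF _ _ ev]) simp
qed

lemma liminf: "((\<lambda>y. poly ([:0, -t, 1:] * q) y * wgt \<zeta> t \<alpha> \<mu> y) \<longlongrightarrow> 0) at_top"
proof -
  have e2: "eventually (\<lambda>y. t < y) at_top"
    by (rule eventually_gt_at_top)
  have ev: "eventually (\<lambda>y. (1 - \<zeta>) * (poly ([:0, -t, 1:] * q) y * y powr (\<alpha> + \<mu>) * exp (-y)) * ((y - t) / y) powr \<alpha>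
      = poly ([:0, -t, 1:] * q) y * wgt \<zeta> t \<alpha> \<mu> y) at_top"
    using e2
  proof eventually_elim
    case (elim y)
    then have y: "y > 0" using tp by simp
    have "(y - t) powr \<alpha> = ((y - t) / y) powr \<alpha> * y powr \<alpha>"
      using elim y by (subst powr_mult[symmetric]) auto
    then show ?case using elim by (simp add: w_right powr_add algebra_simps)
  qed
  have l1: "((\<lambda>y::real. poly ([:0, -t, 1:] * q) y * y powr (\<alpha> + \<mu>) * exp (-y)) \<longlongrightarrow> 0) at_top"
    by (rule polylim)
  have l2: "((\<lambda>y::real. ((y - t) / y) powr \<alpha>) \<longlongrightarrow> 1) at_top"
    by real_asymp
  have "((\<lambda>y. (1 - \<zeta>) * (poly ([:0, -t, 1:] * q) y * y powr (\<alpha> + \<mu>) * exp (-y)) * ((y - t) / y) powr \<alpha>)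
     \<longlongrightarrow> (1 - \<zeta>) * 0 * 1) at_top"
    by (intro tendsto_mult tendsto_const l1 l2)
  then show ?thesis by (rule tr[OF _ _ ev]) simp
qed

lemma ibp_ana: "L (pderiv ([:0, -t, 1:] * q) + q * [:-\<mu>*t, \<alpha>+\<mu>+t, -1:]) = 0"
proof -
  define f where "f y = poly (pderiv ([:0, -t, 1:] * q) + q * [:-\<mu>*t, \<alpha>+\<mu>+t, -1:]) y * wgt \<zeta> t \<alpha> \<mu> y" for y
  define F where "F y = poly ([:0, -t, 1:] * q) y * wgt \<zeta> t \<alpha> \<mu> y" for y
  have intf: "set_integrable lborel {0<..} f" unfolding f_def by (rule int_poly)
  have der: "DERIV F x :> f x" if "0 < x" "x \<noteq> t" for x
    unfolding F_def f_def using F_deriv[OF that] .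
  have cont: "isCont f x" if "0 < x" "x \<noteq> t" for x
    unfolding f_def using f_cont[OF that] .
  have int1: "set_integrable lborel {0<..<t} f"
    by (rule set_integrable_subset[OF intf]) auto
  have int2: "set_integrable lborel {t..} f"
    by (rule set_integrable_subset[OF intf]) (use tp in auto)
  have int3: "set_integrable lborel {t<..} f"
    by (rule set_integrable_subset[OF intf]) (use tp in auto)
  have I1: "(LBINT x=ereal 0..ereal t. f x) = 0 - 0"
  proof (rule interval_integral_FTC_integrable)
    show "ereal 0 < ereal t" using tp by simp
    show "(F has_vector_derivative f x) (at x)" if "ereal 0 < ereal x" "ereal x < ereal t" for x
      using der[of x] that by (simp add: has_real_derivative_iff_has_vector_derivative[symmetric])
    show "isCont f x" if "ereal 0 < ereal x" "ereal x < ereal t" for x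
      using cont[of x] that by simp
    show "set_integrable lborel (einterval (ereal 0) (ereal t)) f" using int1 by simp
    show "((F \<circ> real_of_ereal) \<longlongrightarrow> 0) (at_right (ereal 0))"
      unfolding ereal_tendsto_simps1 F_def by (rule lim0)
    show "((F \<circ> real_of_ereal) \<longlongrightarrow> 0) (at_left (ereal t))"
      unfolding ereal_tendsto_simps1 F_def by (rule limtL)
  qed
  have I2: "(LBINT x=ereal t..\<infinity>. f x) = 0 - 0"
  proof (rule interval_integral_FTC_integrable)
    show "ereal t < \<infinity>" by simp
    show "(F has_vector_derivative f x) (at x)" if "ereal t < ereal x" "ereal x < \<infinity>" for x
      using der[of x] that tp by (simp add: has_real_derivative_iff_has_vector_derivative[symmetric])
    show "isCont f x" if "ereal t < ereal x" "ereal x < \<infinity>" for x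
      using cont[of x] that tp by simp
    show "set_integrable lborel (einterval (ereal t) \<infinity>) f" using int3 by simp
    show "((F \<circ> real_of_ereal) \<longlongrightarrow> 0) (at_right (ereal t))"
      unfolding ereal_tendsto_simps1 F_def by (rule limtR)
    show "((F \<circ> real_of_ereal) \<longlongrightarrow> 0) (at_left \<infinity>)"
      unfolding ereal_tendsto_simps1 F_def by (rule liminf)
  qed
  have J1: "(LINT x:{0<..<t}|lborel. f x) = 0"
    using I1 tp by (simp add: interval_lebesgue_integral_def)
  have J2: "(LINT x:{t<..}|lborel. f x) = 0"
    using I2 by (simp add: interval_lebesgue_integral_def)
  have J3: "(LINT x:{t..}|lborel. f x) = (LINT x:{t<..}|lborel. f x)"
  proof (rule set_integral_cong_set)
    show "set_borel_measurable lborel {t<..} f"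
      using int3 unfolding set_integrable_def set_borel_measurable_def by (rule borel_measurable_integrable)
    show "set_borel_measurable lborel {t..} f"
      using int2 unfolding set_integrable_def set_borel_measurable_def by (rule borel_measurable_integrable)
    show "AE x in lborel. (x \<in> {t<..}) = (x \<in> {t..})"
      using AE_lborel_singleton[of t] by eventually_elim auto
  qed
  have U: "{0<..} = {0<..<t} \<union> {t..}" using tp by auto
  have "(LINT x:{0<..}|lborel. f x) = (LINT x:{0<..<t}|lborel. f x) + (LINT x:{t..}|lborel. f x)"
    unfolding U by (rule set_integral_Un[OF _ int1 int2]) auto
  then have "(LINT x:{0<..}|lborel. f x) = 0" using J1 J2 J3 by simp
  then show ?thesis unfolding L_def f_def .
qed

end

sublocale ana \<subseteq> semi "wgt \<zeta> t \<alpha> \<mu>" p t \<alpha> \<mu>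
  by unfold_locales (rule ibp_ana)

theorem corollary3p2:
  fixes \<zeta> t \<alpha> \<mu> :: real and p :: "nat \<Rightarrow> real poly" and n :: nat
  assumes "\<zeta> < 1" and "t > 0"
    and "orthonormal_system (wgt \<zeta> t \<alpha> \<mu>) p"
    and "n \<ge> 1"
  defines "\<theta>m \<equiv> \<lambda>m::nat. bcoef (wgt \<zeta> t \<alpha> \<mu>) p m - 2 * real m - 1 - \<alpha> - \<mu> - t"
    and "\<kappa> \<equiv> \<lambda>m::nat. (real m + \<mu> / 2) * t + (acoef p m)^2 + gam1 p m / gam p m"
  shows "\<kappa> (n + 1) + \<kappa> n = - \<theta>m n * (\<theta>m n + t + 2 * real n + \<alpha> + 1 + \<mu>) \<and>
         (\<theta>m n / (\<theta>m n + t)) * (\<theta>m (n - 1) / (\<theta>m (n - 1) + t)) =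
         ((\<kappa> n)^2 - \<mu>^2 * t^2 / 4) /
         ((\<kappa> n - (real n + \<alpha> + \<mu> / 2) * t) * (\<kappa> n - (real n + \<mu> / 2) * t))"
proof -
  interpret ana \<zeta> t \<alpha> \<mu> p
    using assms(1-3) by unfold_locales auto
  have th_eq: "\<theta>m m = th m" for m unfolding \<theta>m_def th_def by simp
  have ka_eq: "\<kappa> m = kap m" if "m \<ge> 1" for m
    using that unfolding \<kappa>_def kap_def aa_def G_def gam1_def by simp
  have n1: "n + 1 \<ge> 1" by simp
  have part1: "\<kappa> (n + 1) + \<kappa> n = - \<theta>m n * (\<theta>m n + t + 2 * real n + \<alpha> + 1 + \<mu>)"
    unfolding ka_eq[OF n1] ka_eq[OF assms(4)] th_eq
    using E1'[of n] by (simp add: th_def algebra_simps)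
  have apos: "(acoef p n)^2 \<noteq> 0" using acoef_pos[of n] by simp
  have f0: "(acoef p n)^2 * (th n * th (n - 1)) = (kap n)^2 - \<mu>^2 * t^2 / 4"
    by (rule final0[OF assms(4)])
  have ft: "(acoef p n)^2 * ((th n + t) * (th (n - 1) + t)) =
     (kap n - (real n + \<mu> / 2) * t) * (kap n - (real n + \<alpha> + \<mu> / 2) * t)"
    by (rule finalt[OF assms(4)])
  have "(\<theta>m n / (\<theta>m n + t)) * (\<theta>m (n - 1) / (\<theta>m (n - 1) + t))
      = (th n * th (n - 1)) / ((th n + t) * (th (n - 1) + t))"
    unfolding th_eq by simp
  also have "\<dots> = ((acoef p n)^2 * (th n * th (n - 1))) / ((acoef p n)^2 * ((th n + t) * (th (n - 1) + t)))"
    using apos by simp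
  also have "\<dots> = ((\<kappa> n)^2 - \<mu>^2 * t^2 / 4) /
         ((\<kappa> n - (real n + \<alpha> + \<mu> / 2) * t) * (\<kappa> n - (real n + \<mu> / 2) * t))"
    unfolding f0 ft ka_eq[OF assms(4)] by (simp add: mult.commute)
  finally show ?thesis using part1 by simp
qed

end
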